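(* Let $\mathcal{T}=\mathcal{T}_1\cup\dots\cup\mathcal{T}_d$ be a compact interval partitioned into pairwise disjoint subintervals, $\boldsymbol{\phi}=(\phi_1,\dots,\phi_m)'$ linearly independent functions in $L^2(\mathcal{T})$, $\mathbf{W}=\int_{\mathcal{T}}\boldsymbol{\phi}(t)\boldsymbol{\phi}'(t)dt$ and $\mathbf{W}_{\mathcal{T}_a}=\int_{\mathcal{T}_a}\boldsymbol{\phi}(t)\boldsymbol{\phi}'(t)dt$. Let $X(t)=\mathbf{a}'\boldsymbol{\phi}(t)$ be a rank $m$ univariate stochastic process with random coefficient vector $\mathbf{a}\in\mathbb{R}^m$, mean $\mu(t)=\mathbf{m}_{\mathbf{a}}'\boldsymbol{\phi}(t)$ where $\mathbf{m}_{\mathbf{a}}=E\mathbf{a}$, and covariance $\kappa(s,t)=\boldsymbol{\phi}'(s)\boldsymbol{\Sigma}\boldsymbol{\phi}(t)$ where $\boldsymbol{\Sigma}=\mathrm{Cov}(\mathbf{a})$ is positive definite. Then for each $a\in\{1,\dots,d\}$, $$\theta_{\mathcal{T}_a}(X,\mu;\kappa,m)=(\mathbf{a}-\mathbf{m}_{\mathbf{a}})'\mathbf{W}_{\mathcal{T}_a}\mathbf{W}^{-1}\boldsymbol{\Sigma}^{-1}(\mathbf{a}-\mathbf{m}_{\mathbf{a}}).$$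
   Context: Let $(\lambda_i,\xi_i)$, $i=1,\dots,m$, be the eigenpairs (nonincreasing eigenvalues) of the integral operator with kernel $\kappa$, $\langle f,g\rangle=\int_{\mathcal{T}}fg$, $\langle f,g\rangle_{\mathcal{T}_a}=\int_{\mathcal{T}_a}fg$, and $\mathrm{fmd}^2(Y,\mu;\kappa,m)=\sum_{i=1}^m\lambda_i^{-1}\langle Y-\mu,\xi_i\rangle^2$. With $D=\{1,\dots,d\}$, $\hat X^R(t)=X(t)$ for $t\in\bigcup_{b\in R}\mathcal{T}_b$ and $\hat X^R(t)=\mu(t)$ otherwise, the time-specific Shapley outlyingness contribution is $\theta_{\mathcal{T}_a}(X,\mu;\kappa,m)=\sum_{R\subseteq D\setminus\{a\}}\frac{|R|!(d-|R|-1)!}{d!}\big[\mathrm{fmd}^2(\hat X^{R\cup\{a\}},\mu;\kappa,m)-\mathrm{fmd}^2(\hat X^R,\mu;\kappa,m)\big]$. *)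

theory Defs
  imports "HOL-Probability.Probability"
begin

definition L2_on :: "real set \<Rightarrow> (real \<Rightarrow> real) \<Rightarrow> bool" where
  "L2_on T f \<longleftrightarrow> f \<in> borel_measurable (lebesgue_on T) \<and>
                  integrable (lebesgue_on T) (\<lambda>t. (f t)^2)"

definition ipT :: "real set \<Rightarrow> (real \<Rightarrow> real) \<Rightarrow> (real \<Rightarrow> real) \<Rightarrow> real" where
  "ipT T f g = integral\<^sup>L (lebesgue_on T) (\<lambda>t. f t * g t)"

definition intop :: "real set \<Rightarrow> (real \<Rightarrow> real \<Rightarrow> real) \<Rightarrow> (real \<Rightarrow> real) \<Rightarrow> real \<Rightarrow> real" where
  "intop T \<kappa> f s = integral\<^sup>L (lebesgue_on T) (\<lambda>t. \<kappa> s t * f t)"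

definition eigenpair :: "real set \<Rightarrow> (real \<Rightarrow> real \<Rightarrow> real) \<Rightarrow> real \<Rightarrow> (real \<Rightarrow> real) \<Rightarrow> bool" where
  "eigenpair T \<kappa> \<mu> f \<longleftrightarrow> L2_on T f \<and> \<not> (AE t in lebesgue_on T. f t = 0) \<and>
     (AE s in lebesgue_on T. intop T \<kappa> f s = \<mu> * f s)"

definition leading_eigenpairs ::
  "real set \<Rightarrow> (real \<Rightarrow> real \<Rightarrow> real) \<Rightarrow> nat \<Rightarrow> (nat \<Rightarrow> real) \<Rightarrow> (nat \<Rightarrow> real \<Rightarrow> real) \<Rightarrow> bool" where
  "leading_eigenpairs T \<kappa> m lam xi \<longleftrightarrow>
     (\<forall>i\<in>{1..m}. eigenpair T \<kappa> (lam i) (xi i)) \<and>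
     (\<forall>i\<in>{1..m}. \<forall>j\<in>{1..m}. ipT T (xi i) (xi j) = (if i = j then 1 else 0)) \<and>
     (\<forall>i j. 1 \<le> i \<longrightarrow> i \<le> j \<longrightarrow> j \<le> m \<longrightarrow> lam j \<le> lam i) \<and>
     (\<forall>\<mu> f. eigenpair T \<kappa> \<mu> f \<and> (\<forall>i\<in>{1..m}. ipT T f (xi i) = 0) \<longrightarrow> \<mu> \<le> lam m)"

definition fmd2 :: "real set \<Rightarrow> nat \<Rightarrow> (nat \<Rightarrow> real) \<Rightarrow> (nat \<Rightarrow> real \<Rightarrow> real)
    \<Rightarrow> (real \<Rightarrow> real) \<Rightarrow> (real \<Rightarrow> real) \<Rightarrow> real" where
  "fmd2 T m lam xi Y \<mu> = (\<Sum>i=1..m. (ipT T (\<lambda>t. Y t - \<mu> t) (xi i))^2 / lam i)"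

definition Xhat :: "(nat \<Rightarrow> real set) \<Rightarrow> nat set \<Rightarrow> (real \<Rightarrow> real) \<Rightarrow> (real \<Rightarrow> real) \<Rightarrow> real \<Rightarrow> real" where
  "Xhat P R X \<mu> t = (if t \<in> (\<Union>b\<in>R. P b) then X t else \<mu> t)"

definition theta :: "real set \<Rightarrow> (nat \<Rightarrow> real set) \<Rightarrow> nat \<Rightarrow> nat \<Rightarrow> nat \<Rightarrow> (nat \<Rightarrow> real)
    \<Rightarrow> (nat \<Rightarrow> real \<Rightarrow> real) \<Rightarrow> (real \<Rightarrow> real) \<Rightarrow> (real \<Rightarrow> real) \<Rightarrow> real" where
  "theta T P d a m lam xi X \<mu> =
     (\<Sum>R\<in>Pow ({1..d} - {a}).
        (fact (card R) * fact (d - card R - 1) / fact d) *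
        (fmd2 T m lam xi (Xhat P (insert a R) X \<mu>) \<mu> - fmd2 T m lam xi (Xhat P R X \<mu>) \<mu>))"

definition pos_def_mat :: "real^'n^'n \<Rightarrow> bool" where
  "pos_def_mat S \<longleftrightarrow> (\<forall>x. x \<noteq> 0 \<longrightarrow> x \<bullet> (S *v x) > 0)"

definition gram :: "real set \<Rightarrow> (real \<Rightarrow> real^'n) \<Rightarrow> real^'n^'n" where
  "gram A \<phi> = (\<chi> i j. integral\<^sup>L (lebesgue_on A) (\<lambda>t. \<phi> t $ i * \<phi> t $ j))"

end

theory Submission
  imports Defs
begin


lemma sym_inner:
  fixes A :: "real^'n^'n"
  assumes "transpose A = A"
  shows "x \<bullet> (A *v y) = (A *v x) \<bullet> y"
  by (metis assms dot_lmul_matrix transpose_matrix_vector)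

lemma inv_facts:
  fixes A :: "real^'n^'n"
  assumes "invertible A"
  shows "A ** matrix_inv A = mat 1" "matrix_inv A ** A = mat 1"
proof -
  have "\<exists>A'. A ** A' = mat 1 \<and> A' ** A = mat 1" using assms unfolding invertible_def by blast
  then have "A ** matrix_inv A = mat 1 \<and> matrix_inv A ** A = mat 1"
    unfolding matrix_inv_def by (rule someI_ex)
  then show "A ** matrix_inv A = mat 1" "matrix_inv A ** A = mat 1" by auto
qed

lemma inv_sym:
  fixes A :: "real^'n^'n"
  assumes "transpose A = A" "invertible A"
  shows "transpose (matrix_inv A) = matrix_inv A"
proof -
  have "transpose (matrix_inv A) ** A = mat 1"
    by (metis assms inv_facts(1) matrix_transpose_mul transpose_mat)
  then have "transpose (matrix_inv A) = transpose (matrix_inv A) ** (A ** matrix_inv A)"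
    using inv_facts(1)[OF assms(2)] by simp
  also have "\<dots> = matrix_inv A"
    by (simp add: matrix_mul_assoc \<open>transpose (matrix_inv A) ** A = mat 1\<close>)
  finally show ?thesis .
qed

lemma pd_invertible:
  fixes A :: "real^'n^'n"
  assumes "\<And>x. x \<noteq> 0 \<Longrightarrow> x \<bullet> (A *v x) > 0"
  shows "invertible A"
proof -
  have "\<forall>x. A *v x = 0 \<longrightarrow> x = 0"
    using assms by (metis inner_zero_right less_irrefl)
  then have "\<exists>B. B ** A = mat 1" using matrix_left_invertible_ker by blast
  then show ?thesis using invertible_left_inverse by blast
qed

lemma inv_vec:
  fixes A :: "real^'n^'n"
  assumes "invertible A"
  shows "A *v (matrix_inv A *v x) = x" "matrix_inv A *v (A *v x) = x"
  using inv_facts[OF assms] by (simp_all add: matrix_vector_mul_assoc)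

lemma int_inner:
  fixes \<phi> :: "'a \<Rightarrow> real^'m"
  assumes "\<And>k. integrable N (\<lambda>t. \<phi> t $ k * h t)"
  shows "integrable N (\<lambda>t. (u \<bullet> \<phi> t) * h t)"
    "(\<integral>t. (u \<bullet> \<phi> t) * h t \<partial>N) = u \<bullet> (\<chi> k. \<integral>t. \<phi> t $ k * h t \<partial>N)"
proof -
  have e: "(u \<bullet> \<phi> t) * h t = (\<Sum>k\<in>UNIV. u $ k * (\<phi> t $ k * h t))" for t
    by (simp add: inner_vec_def sum_distrib_right mult.assoc)
  show "integrable N (\<lambda>t. (u \<bullet> \<phi> t) * h t)"
    unfolding e using assms by auto
  show "(\<integral>t. (u \<bullet> \<phi> t) * h t \<partial>N) = u \<bullet> (\<chi> k. \<integral>t. \<phi> t $ k * h t \<partial>N)"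
    unfolding e using assms by (simp add: integral_sum inner_vec_def)
qed

lemma quad_zero:
  fixes B C :: real
  assumes "\<And>t. 2 * t * B + t^2 * C \<le> 0"
  shows "B = 0"
proof (rule ccontr)
  assume "B \<noteq> 0"
  define t where "t = B / (\<bar>C\<bar> + 1)"
  have pos: "\<bar>C\<bar> + 1 > 0" by simp
  have gen: "2 * (B / s) * B + (B / s)^2 * C = B^2 * (2 * s + C) / s^2" if "s \<noteq> 0" for s
    using that by (simp add: field_simps power2_eq_square)
  have "2 * t * B + t^2 * C = B^2 * (2 * (\<bar>C\<bar> + 1) + C) / (\<bar>C\<bar> + 1)^2"
    unfolding t_def using pos gen[of "\<bar>C\<bar> + 1"] by simp
  moreover have "B^2 * (2 * (\<bar>C\<bar> + 1) + C) / (\<bar>C\<bar> + 1)^2 > 0"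
  proof (intro divide_pos_pos mult_pos_pos)
    show "0 < B^2" using \<open>B \<noteq> 0\<close> by simp
    show "0 < 2 * (\<bar>C\<bar> + 1) + C" by (simp add: abs_if)
    show "0 < (\<bar>C\<bar> + 1)^2" using pos by simp
  qed
  ultimately show False using assms[of t] by linarith
qed



lemma interval_leb: "is_interval (S::real set) \<Longrightarrow> S \<in> sets lebesgue"
  using real_interval_borel_measurable sets_completionI_sets sets_lborel by metis

lemma restr_integral:
  fixes h :: "real \<Rightarrow> real"
  assumes "S \<subseteq> T" "S \<in> sets lebesgue" "T \<in> sets lebesgue"
  shows "integral\<^sup>L (lebesgue_on S) h = (\<integral>t. indicator S t * h t \<partial>lebesgue_on T)"
proof -
  have "integral\<^sup>L (lebesgue_on S) h = (\<integral>t. indicator S t *\<^sub>R h t \<partial>lebesgue)"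
    by (rule integral_restrict_space) (use assms in auto)
  also have "\<dots> = (\<integral>t. indicator T t *\<^sub>R (indicator S t * h t) \<partial>lebesgue)"
    using assms(1) by (intro Bochner_Integration.integral_cong) (auto simp: indicator_def)
  also have "\<dots> = (\<integral>t. indicator S t * h t \<partial>lebesgue_on T)"
    by (rule integral_restrict_space[symmetric]) (use assms in auto)
  finally show ?thesis .
qed

lemma L2_prod_integrable:
  assumes "L2_on T f" "L2_on T g"
  shows "integrable (lebesgue_on T) (\<lambda>t. f t * g t)"
proof (rule Bochner_Integration.integrable_bound)
  show "integrable (lebesgue_on T) (\<lambda>t. (f t)^2 + (g t)^2)"
    using assms unfolding L2_on_def by auto
  show "(\<lambda>t. f t * g t) \<in> borel_measurable (lebesgue_on T)"
    using assms unfolding L2_on_def by auto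
  show "AE t in lebesgue_on T. norm (f t * g t) \<le> norm ((f t)^2 + (g t)^2)"
  proof (rule AE_I2)
    fix t
    have "\<bar>f t * g t\<bar> \<le> (f t)^2 + (g t)^2"
    proof -
      have h1: "2 * \<bar>f t\<bar> * \<bar>g t\<bar> \<le> (f t)^2 + (g t)^2"
        using sum_squares_bound[of "\<bar>f t\<bar>" "\<bar>g t\<bar>"] by simp
      have h2: "0 \<le> \<bar>f t\<bar> * \<bar>g t\<bar>" by simp
      from h1 h2 have "\<bar>f t\<bar> * \<bar>g t\<bar> \<le> (f t)^2 + (g t)^2" by linarith
      then show ?thesis by (simp add: abs_mult)
    qed
    then show "norm (f t * g t) \<le> norm ((f t)^2 + (g t)^2)" by simp
  qed
qed




lemma gram_comp:
  fixes \<phi> :: "'a \<Rightarrow> real^'m"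
  assumes "\<And>i j. integrable N (\<lambda>t. \<phi> t $ i * \<phi> t $ j)"
  shows "integrable N (\<lambda>t. \<phi> t $ k * (v \<bullet> \<phi> t))"
    "(\<integral>t. \<phi> t $ k * (v \<bullet> \<phi> t) \<partial>N) = ((\<chi> i j. \<integral>t. \<phi> t $ i * \<phi> t $ j \<partial>N) *v v) $ k"
proof -
  have e: "\<phi> t $ k * (v \<bullet> \<phi> t) = (\<Sum>j\<in>UNIV. v $ j * (\<phi> t $ k * \<phi> t $ j))" for t
    by (simp add: inner_vec_def sum_distrib_left mult_ac)
  show "integrable N (\<lambda>t. \<phi> t $ k * (v \<bullet> \<phi> t))"
    unfolding e using assms by auto
  show "(\<integral>t. \<phi> t $ k * (v \<bullet> \<phi> t) \<partial>N) = ((\<chi> i j. \<integral>t. \<phi> t $ i * \<phi> t $ j \<partial>N) *v v) $ k"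
    unfolding e using assms by (simp add: integral_sum matrix_vector_mult_def mult_ac)
qed

lemma gram_ip:
  fixes \<phi> :: "'a \<Rightarrow> real^'m"
  assumes "\<And>i j. integrable N (\<lambda>t. \<phi> t $ i * \<phi> t $ j)"
  shows "integrable N (\<lambda>t. (u \<bullet> \<phi> t) * (v \<bullet> \<phi> t))"
    "(\<integral>t. (u \<bullet> \<phi> t) * (v \<bullet> \<phi> t) \<partial>N) = u \<bullet> ((\<chi> i j. \<integral>t. \<phi> t $ i * \<phi> t $ j \<partial>N) *v v)"
proof -
  have i: "\<And>k. integrable N (\<lambda>t. \<phi> t $ k * (v \<bullet> \<phi> t))" using gram_comp(1)[OF assms] .
  show "integrable N (\<lambda>t. (u \<bullet> \<phi> t) * (v \<bullet> \<phi> t))" using int_inner(1)[of N \<phi>, OF i] .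
  have "(\<integral>t. (u \<bullet> \<phi> t) * (v \<bullet> \<phi> t) \<partial>N) = u \<bullet> (\<chi> k. \<integral>t. \<phi> t $ k * (v \<bullet> \<phi> t) \<partial>N)"
    using int_inner(2)[of N \<phi>, OF i] .
  also have "(\<chi> k. \<integral>t. \<phi> t $ k * (v \<bullet> \<phi> t) \<partial>N) = (\<chi> i j. \<integral>t. \<phi> t $ i * \<phi> t $ j \<partial>N) *v v"
    using gram_comp(2)[OF assms] by (simp add: vec_eq_iff)
  finally show "(\<integral>t. (u \<bullet> \<phi> t) * (v \<bullet> \<phi> t) \<partial>N) = u \<bullet> ((\<chi> i j. \<integral>t. \<phi> t $ i * \<phi> t $ j \<partial>N) *v v)" .
qed

lemma gram_sym:
  "transpose (\<chi> i j. \<integral>t. \<phi> t $ i * \<phi> t $ j \<partial>N) = (\<chi> i j. \<integral>t. (\<phi> t :: real^'m) $ i * \<phi> t $ j \<partial>N)"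
  by (simp add: transpose_def vec_eq_iff mult.commute)

lemma gram_pd:
  fixes \<phi> :: "'a \<Rightarrow> real^'m"
  assumes "\<And>i j. integrable N (\<lambda>t. \<phi> t $ i * \<phi> t $ j)"
    and indep: "\<And>c. (AE t in N. c \<bullet> \<phi> t = 0) \<Longrightarrow> c = 0"
    and "x \<noteq> 0"
  shows "x \<bullet> ((\<chi> i j. \<integral>t. \<phi> t $ i * \<phi> t $ j \<partial>N) *v x) > 0"
proof -
  have eq: "x \<bullet> ((\<chi> i j. \<integral>t. \<phi> t $ i * \<phi> t $ j \<partial>N) *v x) = (\<integral>t. (x \<bullet> \<phi> t) * (x \<bullet> \<phi> t) \<partial>N)"
    using gram_ip(2)[OF assms(1)] by simp
  have int: "integrable N (\<lambda>t. (x \<bullet> \<phi> t) * (x \<bullet> \<phi> t))" using gram_ip(1)[OF assms(1)] .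
  have ge: "(\<integral>t. (x \<bullet> \<phi> t) * (x \<bullet> \<phi> t) \<partial>N) \<ge> 0" by (rule integral_nonneg_AE) simp
  have "(\<integral>t. (x \<bullet> \<phi> t) * (x \<bullet> \<phi> t) \<partial>N) \<noteq> 0"
  proof
    assume "(\<integral>t. (x \<bullet> \<phi> t) * (x \<bullet> \<phi> t) \<partial>N) = 0"
    then have "AE t in N. (x \<bullet> \<phi> t) * (x \<bullet> \<phi> t) = 0"
      using integral_nonneg_eq_0_iff_AE[OF int] by simp
    then have "AE t in N. x \<bullet> \<phi> t = 0" by (rule AE_mp) simp
    then show False using indep assms(3) by blast
  qed
  with ge eq show ?thesis by linarith
qed

lemma restr_integrable:
  fixes h :: "real \<Rightarrow> real"
  assumes "S \<subseteq> T" "S \<in> sets lebesgue" "T \<in> sets lebesgue" "integrable (lebesgue_on T) h"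
  shows "integrable (lebesgue_on S) h"
proof -
  have "integrable lebesgue (\<lambda>t. indicator T t *\<^sub>R h t)"
    using assms(4) integrable_restrict_space[of T lebesgue h] assms(3) by simp
  then have "integrable lebesgue (\<lambda>t. indicator S t *\<^sub>R (indicator T t *\<^sub>R h t))"
    using assms(2) by (rule integrable_mult_indicator[rotated])
  moreover have "(\<lambda>t. indicator S t *\<^sub>R (indicator T t *\<^sub>R h t)) = (\<lambda>t. indicator S t *\<^sub>R h t)"
    using assms(1) by (intro ext) (auto simp: indicator_def of_bool_def)
  ultimately show ?thesis
    using integrable_restrict_space[of S lebesgue h] assms(2) by simp
qed



lemma sum_pow_card:
  fixes f :: "nat \<Rightarrow> real"
  assumes "finite S"
  shows "(\<Sum>R\<in>Pow S. f (card R)) = (\<Sum>k\<le>card S. of_nat (card S choose k) * f k)"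
proof -
  have "(\<Sum>R\<in>Pow S. f (card R)) = (\<Sum>k\<in>{..card S}. \<Sum>R\<in>{R\<in>Pow S. card R = k}. f (card R))"
    by (rule sum.group[symmetric]) (use assms card_mono in auto)
  also have "\<dots> = (\<Sum>k\<le>card S. of_nat (card S choose k) * f k)"
  proof (rule sum.cong[OF refl])
    fix k assume "k \<in> {..card S}"
    have "(\<Sum>R\<in>{R\<in>Pow S. card R = k}. f (card R)) = (\<Sum>R\<in>{R\<in>Pow S. card R = k}. f k)"
      by (rule sum.cong) auto
    also have "\<dots> = of_nat (card {R\<in>Pow S. card R = k}) * f k" by simp
    also have "{R\<in>Pow S. card R = k} = {R. R \<subseteq> S \<and> card R = k}" by auto
    finally show "(\<Sum>R\<in>{R\<in>Pow S. card R = k}. f (card R)) = of_nat (card S choose k) * f k"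
      using n_subsets[OF assms] by simp
  qed
  finally show ?thesis .
qed

lemma shapley_weights_one:
  assumes "finite S" "card S = d - 1" "d \<ge> 1"
  shows "(\<Sum>R\<in>Pow S. (fact (card R) * fact (d - card R - 1) / fact d :: real)) = 1"
proof -
  have "(\<Sum>R\<in>Pow S. (fact (card R) * fact (d - card R - 1) / fact d :: real))
     = (\<Sum>k\<le>d-1. of_nat ((d-1) choose k) * (fact k * fact (d - k - 1) / fact d))"
    using sum_pow_card[OF assms(1), of "\<lambda>k. fact k * fact (d - k - 1) / fact d"] assms(2) by simp
  also have "\<dots> = (\<Sum>k\<le>d-1. 1 / of_nat d)"
  proof (rule sum.cong[OF refl])
    fix k assume k: "k \<in> {..d-1}"
    have e: "fact k * fact (d - 1 - k) * of_nat ((d-1) choose k) = (fact (d-1) :: real)"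
      using binomial_fact_lemma[of k "d-1"] k by (metis atMost_iff of_nat_fact of_nat_mult)
    have fd: "(fact d :: real) = of_nat d * fact (d-1)"
      using assms(3) by (cases d) (simp_all add: fact_Suc)
    have dk: "d - k - 1 = d - 1 - k" by simp
    have "of_nat ((d-1) choose k) * (fact k * fact (d - k - 1) / fact d)
        = (fact k * fact (d - 1 - k) * of_nat ((d-1) choose k)) / (fact d :: real)"
      unfolding dk by (simp add: mult_ac)
    also have "\<dots> = fact (d-1) / (of_nat d * fact (d-1))" unfolding e fd ..
    also have "\<dots> = 1 / of_nat d" by simp
    finally show "of_nat ((d-1) choose k) * (fact k * fact (d - k - 1) / fact d) = 1 / (of_nat d :: real)" .
  qed
  also have "\<dots> = 1" using assms(3) by simp
  finally show ?thesis .
qed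

lemma shapley_weights_half:
  assumes "finite S" "card S = d - 1" "d \<ge> 1" "b \<in> S"
  shows "(\<Sum>R\<in>{R\<in>Pow S. b \<in> R}. (fact (card R) * fact (d - card R - 1) / fact d :: real)) = 1/2"
proof -
  define w where "w = (\<lambda>k::nat. (fact k * fact (d - k - 1) / fact d :: real))"
  have wsym: "w (d - 1 - k) = w k" if "k \<le> d - 1" for k
  proof -
    have "d - (d - 1 - k) - 1 = k" using that by arith
    then show ?thesis unfolding w_def by (simp add: mult.commute)
  qed
  have fin: "finite (Pow S)" using assms(1) by simp
  have split: "(\<Sum>R\<in>Pow S. w (card R)) = (\<Sum>R\<in>{R\<in>Pow S. b \<in> R}. w (card R)) + (\<Sum>R\<in>{R\<in>Pow S. b \<notin> R}. w (card R))"
  proof -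
    have "(\<Sum>R\<in>Pow S. w (card R)) = (\<Sum>R\<in>{R\<in>Pow S. b \<in> R} \<union> {R\<in>Pow S. b \<notin> R}. w (card R))"
      by (rule sum.cong) auto
    also have "\<dots> = (\<Sum>R\<in>{R\<in>Pow S. b \<in> R}. w (card R)) + (\<Sum>R\<in>{R\<in>Pow S. b \<notin> R}. w (card R))"
      by (rule sum.union_disjoint) (use fin in auto)
    finally show ?thesis .
  qed
  have "(\<Sum>R\<in>{R\<in>Pow S. b \<notin> R}. w (card R)) = (\<Sum>R\<in>(\<lambda>R. S - R) ` {R\<in>Pow S. b \<in> R}. w (card R))"
  proof -
    have "(\<lambda>R. S - R) ` {R\<in>Pow S. b \<in> R} = {R\<in>Pow S. b \<notin> R}"
    proof
      show "(\<lambda>R. S - R) ` {R\<in>Pow S. b \<in> R} \<subseteq> {R\<in>Pow S. b \<notin> R}" by auto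
      show "{R\<in>Pow S. b \<notin> R} \<subseteq> (\<lambda>R. S - R) ` {R\<in>Pow S. b \<in> R}"
      proof
        fix R assume "R \<in> {R\<in>Pow S. b \<notin> R}"
        then have "R = S - (S - R)" "S - R \<in> {R\<in>Pow S. b \<in> R}" using assms(4) by auto
        then show "R \<in> (\<lambda>R. S - R) ` {R\<in>Pow S. b \<in> R}" by blast
      qed
    qed
    then show ?thesis by simp
  qed
  also have "\<dots> = (\<Sum>R\<in>{R\<in>Pow S. b \<in> R}. w (card (S - R)))"
    by (rule sum.reindex[unfolded comp_def]) (auto simp: inj_on_def)
  also have "\<dots> = (\<Sum>R\<in>{R\<in>Pow S. b \<in> R}. w (card R))"
  proof (rule sum.cong[OF refl])
    fix R assume R: "R \<in> {R\<in>Pow S. b \<in> R}"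
    then have "R \<subseteq> S" by simp
    then have "card (S - R) = card S - card R" using assms(1)
      by (meson card_Diff_subset finite_subset)
    then have "card (S - R) = d - 1 - card R" using assms(2) by simp
    moreover have "card R \<le> d - 1" using R assms(1,2) by (metis CollectD PowD card_mono)
    ultimately show "w (card (S - R)) = w (card R)" using wsym by simp
  qed
  finally have eq: "(\<Sum>R\<in>{R\<in>Pow S. b \<notin> R}. w (card R)) = (\<Sum>R\<in>{R\<in>Pow S. b \<in> R}. w (card R))" .
  have "(\<Sum>R\<in>Pow S. w (card R)) = 1" using shapley_weights_one[OF assms(1-3)] unfolding w_def .
  with split eq show ?thesis unfolding w_def by simp
qed

lemma shapley_quad:
  fixes q :: "nat \<Rightarrow> nat \<Rightarrow> real"
  assumes sym: "\<And>b c. q b c = q c b" and d: "d \<ge> 1" and a: "a \<in> {1..d}"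
  shows "(\<Sum>R\<in>Pow ({1..d} - {a}). (fact (card R) * fact (d - card R - 1) / fact d) *
            ((\<Sum>b\<in>insert a R. \<Sum>c\<in>insert a R. q b c) - (\<Sum>b\<in>R. \<Sum>c\<in>R. q b c)))
         = (\<Sum>b\<in>{1..d}. q a b)"
proof -
  define S where "S = {1..d} - {a}"
  define w where "w = (\<lambda>k::nat. (fact k * fact (d - k - 1) / fact d :: real))"
  have finS: "finite S" and cS: "card S = d - 1" using a unfolding S_def by auto
  have diff: "(\<Sum>b\<in>insert a R. \<Sum>c\<in>insert a R. q b c) - (\<Sum>b\<in>R. \<Sum>c\<in>R. q b c)
      = q a a + 2 * (\<Sum>b\<in>S. if b \<in> R then q a b else 0)" if R: "R \<in> Pow S" for R
  proof -
    have fR: "finite R" and aR: "a \<notin> R" using R finS unfolding S_def by (auto intro: finite_subset)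
    have "(\<Sum>b\<in>S. if b \<in> R then q a b else 0) = (\<Sum>b\<in>R. q a b)"
      using R finS by (simp add: sum.If_cases Int_absorb1)
    moreover have "(\<Sum>b\<in>insert a R. \<Sum>c\<in>insert a R. q b c) = q a a + (\<Sum>c\<in>R. q a c) + (\<Sum>b\<in>R. q b a) + (\<Sum>b\<in>R. \<Sum>c\<in>R. q b c)"
      using fR aR by (simp add: sum.distrib)
    ultimately show ?thesis using sym by simp
  qed
  have "(\<Sum>R\<in>Pow S. w (card R) * ((\<Sum>b\<in>insert a R. \<Sum>c\<in>insert a R. q b c) - (\<Sum>b\<in>R. \<Sum>c\<in>R. q b c)))
      = (\<Sum>R\<in>Pow S. w (card R) * (q a a + 2 * (\<Sum>b\<in>S. if b \<in> R then q a b else 0)))"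
    using diff by (intro sum.cong) auto
  also have "\<dots> = q a a * (\<Sum>R\<in>Pow S. w (card R)) + 2 * (\<Sum>b\<in>S. q a b * (\<Sum>R\<in>Pow S. if b \<in> R then w (card R) else 0))"
  proof -
    have e1: "(\<Sum>R\<in>Pow S. w (card R) * (q a a + 2 * (\<Sum>b\<in>S. if b \<in> R then q a b else 0)))
        = q a a * (\<Sum>R\<in>Pow S. w (card R)) + 2 * (\<Sum>R\<in>Pow S. w (card R) * (\<Sum>b\<in>S. if b \<in> R then q a b else 0))"
      by (simp add: distrib_left sum.distrib sum_distrib_left mult_ac)
    have e2: "(\<Sum>R\<in>Pow S. w (card R) * (\<Sum>b\<in>S. if b \<in> R then q a b else 0))
        = (\<Sum>R\<in>Pow S. \<Sum>b\<in>S. (if b \<in> R then w (card R) else 0) * q a b)"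
      by (intro sum.cong refl) (simp add: sum_distrib_left, intro sum.cong refl, simp)
    have e3: "(\<Sum>R\<in>Pow S. \<Sum>b\<in>S. (if b \<in> R then w (card R) else 0) * q a b)
        = (\<Sum>b\<in>S. \<Sum>R\<in>Pow S. (if b \<in> R then w (card R) else 0) * q a b)"
      by (rule sum.swap)
    have e4: "(\<Sum>b\<in>S. \<Sum>R\<in>Pow S. (if b \<in> R then w (card R) else 0) * q a b)
        = (\<Sum>b\<in>S. q a b * (\<Sum>R\<in>Pow S. if b \<in> R then w (card R) else 0))"
      by (simp add: sum_distrib_left mult.commute)
    show ?thesis using e1 e2 e3 e4 by simp
  qed
  also have "\<dots> = q a a + (\<Sum>b\<in>S. q a b)"
  proof -
    have h: "(\<Sum>R\<in>Pow S. if b \<in> R then w (card R) else 0) = 1/2" if "b \<in> S" for b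
    proof -
      have "(\<Sum>R\<in>Pow S. if b \<in> R then w (card R) else 0) = (\<Sum>R\<in>{R\<in>Pow S. b \<in> R}. w (card R))"
        using finS by (simp add: sum.If_cases Int_def)
      then show ?thesis using shapley_weights_half[OF finS cS d that] unfolding w_def by simp
    qed
    have "(\<Sum>b\<in>S. q a b * (\<Sum>R\<in>Pow S. if b \<in> R then w (card R) else 0)) = (\<Sum>b\<in>S. q a b * (1/2))"
      using h by (intro sum.cong) auto
    moreover have "(\<Sum>R\<in>Pow S. w (card R)) = 1" using shapley_weights_one[OF finS cS d] unfolding w_def .
    ultimately show ?thesis by (simp add: sum_divide_distrib[symmetric])
  qed
  also have "\<dots> = (\<Sum>b\<in>{1..d}. q a b)"
    using a sum.remove[of "{1..d}" a "q a"] unfolding S_def by simp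
  finally show ?thesis unfolding S_def w_def .
qed

theorem lemma4:
  fixes M :: "'w measure"
    and A :: "'w \<Rightarrow> real^'m"
    and \<phi> :: "real \<Rightarrow> real^'m"
    and lo hi :: real
    and P :: "nat \<Rightarrow> real set"
    and d a :: nat
    and lam :: "nat \<Rightarrow> real"
    and xi :: "nat \<Rightarrow> real \<Rightarrow> real"
  defines "T \<equiv> {lo..hi}"
    and "ma \<equiv> (\<chi> i. integral\<^sup>L M (\<lambda>w. A w $ i))"
    and "\<Sigma> \<equiv> (\<chi> i j. integral\<^sup>L M (\<lambda>w. (A w $ i - integral\<^sup>L M (\<lambda>v. A v $ i)) * (A w $ j - integral\<^sup>L M (\<lambda>v. A v $ j))))"
  assumes prob: "prob_space M"
    and A_meas: "\<And>i. (\<lambda>w. A w $ i) \<in> borel_measurable M"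
    and A_sq: "\<And>i. integrable M (\<lambda>w. (A w $ i)^2)"
    and Sigma_pd: "pos_def_mat \<Sigma>"
    and d_pos: "d \<ge> 1"
    and parts_int: "\<And>b. b \<in> {1..d} \<Longrightarrow> is_interval (P b)"
    and parts_disj: "\<And>b c. b \<in> {1..d} \<Longrightarrow> c \<in> {1..d} \<Longrightarrow> b \<noteq> c \<Longrightarrow> P b \<inter> P c = {}"
    and parts_union: "(\<Union>b\<in>{1..d}. P b) = T"
    and phi_L2: "\<And>i. L2_on T (\<lambda>t. \<phi> t $ i)"
    and phi_indep: "\<And>c. (AE t in lebesgue_on T. c \<bullet> \<phi> t = 0) \<Longrightarrow> c = 0"
    and eig: "leading_eigenpairs T (\<lambda>s t. \<phi> s \<bullet> (\<Sigma> *v \<phi> t)) CARD('m) lam xi"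
    and a_in: "a \<in> {1..d}"
    and w_in: "\<omega> \<in> space M"
  shows "theta T P d a CARD('m) lam xi (\<lambda>t. A \<omega> \<bullet> \<phi> t) (\<lambda>t. ma \<bullet> \<phi> t)
         = (A \<omega> - ma) \<bullet> ((gram (P a) \<phi> ** matrix_inv (gram T \<phi>) ** matrix_inv \<Sigma>) *v (A \<omega> - ma))"
proof -
  let ?n = "CARD('m)"
  let ?L = "lebesgue_on T"
  define \<kappa> where "\<kappa> = (\<lambda>s t. \<phi> s \<bullet> (\<Sigma> *v \<phi> t))"
  define W where "W = gram T \<phi>"
  define Wi where "Wi = matrix_inv W"
  define Si where "Si = matrix_inv \<Sigma>"
  define c where "c = A \<omega> - ma"
  define g where "g = (\<lambda>j. (\<chi> k. \<integral>t. \<phi> t $ k * xi j t \<partial>?L))"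
  have Tleb: "T \<in> sets lebesgue" unfolding T_def by simp
  have Pleb: "P b \<in> sets lebesgue" if "b \<in> {1..d}" for b using interval_leb parts_int that by blast
  have Psub: "P b \<subseteq> T" if "b \<in> {1..d}" for b using parts_union that by blast
  have setsL: "S \<in> sets ?L" if "S \<subseteq> T" "S \<in> sets lebesgue" for S
    using that Tleb by (simp add: sets_restrict_space_iff)
  have ep: "eigenpair T \<kappa> (lam i) (xi i)" if "i \<in> {1..?n}" for i
    using eig that unfolding leading_eigenpairs_def \<kappa>_def by blast
  have on: "ipT T (xi i) (xi j) = (if i = j then 1 else 0)" if "i \<in> {1..?n}" "j \<in> {1..?n}" for i j
    using eig that unfolding leading_eigenpairs_def by blast
  have mono: "lam j \<le> lam i" if "1 \<le> i" "i \<le> j" "j \<le> ?n" for i j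
    using eig that unfolding leading_eigenpairs_def by blast
  have maxl: "\<mu> \<le> lam ?n" if "eigenpair T \<kappa> \<mu> f" "\<forall>i\<in>{1..?n}. ipT T f (xi i) = 0" for \<mu> f
    using eig that unfolding leading_eigenpairs_def \<kappa>_def by blast
  have xiL2: "L2_on T (xi i)" if "i \<in> {1..?n}" for i using ep[OF that] unfolding eigenpair_def by blast
  have phimeas: "(\<lambda>t. \<phi> t $ k) \<in> borel_measurable ?L" for k using phi_L2 unfolding L2_on_def by blast
  have ximeas: "xi i \<in> borel_measurable ?L" if "i \<in> {1..?n}" for i using xiL2[OF that] unfolding L2_on_def by blast
  have innmeas: "(\<lambda>t. u \<bullet> \<phi> t) \<in> borel_measurable ?L" for u
  proof -
    have "(\<lambda>t. u \<bullet> \<phi> t) = (\<lambda>t. \<Sum>k\<in>UNIV. u $ k * \<phi> t $ k)" by (simp add: inner_vec_def)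
    then show ?thesis using phimeas by simp
  qed
  have int_pp: "integrable ?L (\<lambda>t. \<phi> t $ i * \<phi> t $ j)" for i j
    using L2_prod_integrable[OF phi_L2 phi_L2] .
  have int_px: "integrable ?L (\<lambda>t. \<phi> t $ k * xi i t)" if "i \<in> {1..?n}" for i k
    using L2_prod_integrable[OF phi_L2 xiL2[OF that]] .
  have int_pp_P: "integrable (lebesgue_on (P b)) (\<lambda>t. \<phi> t $ i * \<phi> t $ j)" if "b \<in> {1..d}" for b i j
    using restr_integrable[OF Psub[OF that] Pleb[OF that] Tleb] int_pp by blast
  have W_ip: "(\<integral>t. (u \<bullet> \<phi> t) * (v \<bullet> \<phi> t) \<partial>?L) = u \<bullet> (W *v v)" for u v
    unfolding W_def gram_def using gram_ip(2)[of ?L \<phi>, OF int_pp] .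
  have W_ipi: "integrable ?L (\<lambda>t. (u \<bullet> \<phi> t) * (v \<bullet> \<phi> t))" for u v
    using gram_ip(1)[of ?L \<phi>, OF int_pp] .
  have W_comp: "(\<integral>t. \<phi> t $ k * (v \<bullet> \<phi> t) \<partial>?L) = (W *v v) $ k" for k v
    unfolding W_def gram_def using gram_comp(2)[of ?L \<phi>, OF int_pp] .
  have W_compi: "integrable ?L (\<lambda>t. \<phi> t $ k * (v \<bullet> \<phi> t))" for k v
    using gram_comp(1)[of ?L \<phi>, OF int_pp] .
  have Wsym: "transpose W = W" unfolding W_def gram_def by (rule gram_sym)
  have Wb_sym: "transpose (gram S \<phi>) = gram S \<phi>" for S unfolding gram_def by (rule gram_sym)
  have Wpd: "x \<bullet> (W *v x) > 0" if "x \<noteq> 0" for x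
    unfolding W_def gram_def using gram_pd[of ?L \<phi>, OF int_pp phi_indep that] .
  have Winv: "invertible W" using pd_invertible Wpd by blast
  have Ssym: "transpose \<Sigma> = \<Sigma>" unfolding \<Sigma>_def by (simp add: transpose_def vec_eq_iff mult.commute)
  have Sinv: "invertible \<Sigma>" using pd_invertible Sigma_pd unfolding pos_def_mat_def by blast
  have Wisym: "transpose Wi = Wi" unfolding Wi_def using inv_sym[OF Wsym Winv] .
  have Sisym: "transpose Si = Si" unfolding Si_def using inv_sym[OF Ssym Sinv] .
  have eigAE: "AE s in ?L. \<phi> s \<bullet> (\<Sigma> *v g j) = lam j * xi j s" if j: "j \<in> {1..?n}" for j
  proof -
    have "AE s in ?L. intop T \<kappa> (xi j) s = lam j * xi j s" using ep[OF j] unfolding eigenpair_def by blast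
    moreover have "intop T \<kappa> (xi j) s = \<phi> s \<bullet> (\<Sigma> *v g j)" for s
    proof -
      have "intop T \<kappa> (xi j) s = (\<integral>t. ((\<Sigma> *v \<phi> s) \<bullet> \<phi> t) * xi j t \<partial>?L)"
        unfolding intop_def \<kappa>_def sym_inner[OF Ssym] ..
      also have "\<dots> = (\<Sigma> *v \<phi> s) \<bullet> g j"
        unfolding g_def using int_inner(2)[of ?L \<phi> "xi j", OF int_px[OF j]] .
      also have "\<dots> = \<phi> s \<bullet> (\<Sigma> *v g j)" using sym_inner[OF Ssym] by simp
      finally show ?thesis .
    qed
    ultimately show ?thesis by simp
  qed
  have WSg: "W *v (\<Sigma> *v g j) = lam j *\<^sub>R g j" if j: "j \<in> {1..?n}" for j
  proof -
    have "(W *v (\<Sigma> *v g j)) $ k = lam j * g j $ k" for k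
    proof -
      have "(W *v (\<Sigma> *v g j)) $ k = (\<integral>t. \<phi> t $ k * ((\<Sigma> *v g j) \<bullet> \<phi> t) \<partial>?L)" using W_comp by simp
      also have "\<dots> = (\<integral>t. lam j * (\<phi> t $ k * xi j t) \<partial>?L)"
      proof (rule integral_cong_AE)
        show "(\<lambda>t. \<phi> t $ k * ((\<Sigma> *v g j) \<bullet> \<phi> t)) \<in> borel_measurable ?L"
          using W_compi by (rule borel_measurable_integrable)
        show "(\<lambda>t. lam j * (\<phi> t $ k * xi j t)) \<in> borel_measurable ?L"
          using int_px[OF j] by (intro borel_measurable_integrable) auto
        show "AE t in ?L. \<phi> t $ k * ((\<Sigma> *v g j) \<bullet> \<phi> t) = lam j * (\<phi> t $ k * xi j t)"
          using eigAE[OF j] by eventually_elim (simp add: inner_commute)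
      qed
      also have "\<dots> = lam j * g j $ k" unfolding g_def by simp
      finally show ?thesis .
    qed
    then show ?thesis by (simp add: vec_eq_iff)
  qed
  have lam0: "lam j \<noteq> 0" if j0: "j \<in> {1..?n}" for j
  proof
    assume lj: "lam j = 0"
    have "AE s in ?L. (\<Sigma> *v g j) \<bullet> \<phi> s = 0"
      using eigAE[OF j0] by eventually_elim (simp add: lj inner_commute)
    then have "\<Sigma> *v g j = 0" by (rule phi_indep)
    then have gj0: "g j = 0" using Sigma_pd unfolding pos_def_mat_def by (metis inner_zero_right less_irrefl)
    have lamn: "lam ?n \<le> 0" using mono[of j ?n] j0 lj by auto
    define V where "V = (\<Inter>i\<in>{1..?n}. {x. g i \<bullet> x = 0})"
    have inV: "x \<in> V \<longleftrightarrow> (\<forall>i\<in>{1..?n}. g i \<bullet> x = 0)" for x unfolding V_def by auto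
    have Vsub: "x + r *\<^sub>R y \<in> V" if "x \<in> V" "y \<in> V" for x y r
      using that unfolding inV by (simp add: inner_add_right)
    have Vscale: "r *\<^sub>R y \<in> V" if "y \<in> V" for y r
      using that unfolding inV by simp
    have dimlt: "dim (g ` {1..?n}) < ?n"
    proof -
      have "g ` {1..?n} \<subseteq> span (g ` ({1..?n} - {j}))"
      proof
        fix y assume "y \<in> g ` {1..?n}"
        then obtain i where i: "i \<in> {1..?n}" "y = g i" by auto
        show "y \<in> span (g ` ({1..?n} - {j}))"
        proof (cases "i = j")
          case True then show ?thesis using i gj0 by (simp add: span_zero)
        next
          case False then show ?thesis using i by (intro span_base) auto
        qed
      qed
      then have "dim (g ` {1..?n}) \<le> card (g ` ({1..?n} - {j}))" by (rule dim_le_card) simp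
      also have "\<dots> \<le> card ({1..?n} - {j})" by (rule card_image_le) simp
      also have "\<dots> < ?n" using j0 by simp
      finally show ?thesis .
    qed
    obtain x0 where x0: "x0 \<noteq> 0" "\<And>y. y \<in> span (g ` {1..?n}) \<Longrightarrow> orthogonal x0 y"
      using orthogonal_to_subspace_exists[of "g ` {1..?n}"] dimlt by auto
    have x0V: "x0 \<in> V" unfolding inV
    proof
      fix i assume i: "i \<in> {1..?n}"
      have "g i \<in> span (g ` {1..?n})" using i by (intro span_base) auto
      then have "orthogonal x0 (g i)" by (rule x0(2))
      then show "g i \<bullet> x0 = 0" by (simp add: orthogonal_def inner_commute)
    qed
    define N where "N = (\<lambda>x. (W *v x) \<bullet> (\<Sigma> *v (W *v x)))"
    define D where "D = (\<lambda>x. x \<bullet> (W *v x))"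
    define K where "K = V \<inter> sphere 0 1"
    have Vclosed: "closed V" unfolding V_def by (intro closed_INT) (simp add: closed_hyperplane)
    have Kc: "compact K" unfolding K_def using Vclosed by (intro closed_Int_compact) auto
    have x1K: "(1 / norm x0) *\<^sub>R x0 \<in> K" unfolding K_def using x0V x0(1) Vscale by auto
    then have Kne: "K \<noteq> {}" by auto
    have Dpos: "D x > 0" if "x \<noteq> 0" for x using Wpd that unfolding D_def by simp
    have cW: "continuous_on S ((*v) M')" for S and M' :: "real^'m^'m"
      by (rule matrix_vector_mult_linear_continuous_on)
    have cN: "continuous_on K N" unfolding N_def
      by (intro continuous_on_inner cW continuous_on_compose2[OF cW cW]) auto
    have cD: "continuous_on K D" unfolding D_def
      by (intro continuous_on_inner continuous_on_id cW)
    have cont: "continuous_on K (\<lambda>x. N x / D x)"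
    proof (rule continuous_on_divide[OF cN cD])
      show "\<forall>x\<in>K. D x \<noteq> 0"
      proof
        fix x assume "x \<in> K"
        then have "x \<noteq> 0" unfolding K_def by auto
        then show "D x \<noteq> 0" using Dpos by force
      qed
    qed
    obtain xs where xs: "xs \<in> K" "\<And>y. y \<in> K \<Longrightarrow> N y / D y \<le> N xs / D xs"
      using continuous_attains_sup[OF Kc Kne cont] by auto
    define M where "M = N xs / D xs"
    have xsV: "xs \<in> V" and xsn: "xs \<noteq> 0" using xs(1) unfolding K_def by auto
    have Dxs: "D xs > 0" using Dpos xsn .
    have NM: "N xs = M * D xs" unfolding M_def using Dxs by simp
    have hN: "N (r *\<^sub>R y) = r^2 * N y" for r y
      unfolding N_def by (simp add: matrix_vector_mult_scaleR power2_eq_square)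
    have hD: "D (r *\<^sub>R y) = r^2 * D y" for r y
      unfolding D_def by (simp add: matrix_vector_mult_scaleR power2_eq_square)
    have maxV: "N y \<le> M * D y" if y: "y \<in> V" for y
    proof (cases "y = 0")
      case True then show ?thesis unfolding N_def D_def by simp
    next
      case False
      define r where "r = 1 / norm y"
      have r0: "r \<noteq> 0" using False unfolding r_def by simp
      have "r *\<^sub>R y \<in> K" unfolding K_def r_def using Vscale[OF y] False by auto
      then have "N (r *\<^sub>R y) / D (r *\<^sub>R y) \<le> M" using xs(2) unfolding M_def by blast
      then have "N y / D y \<le> M" unfolding hN hD using r0 by simp
      then show ?thesis using Dpos[OF False] by (simp add: divide_le_eq)
    qed
    have crossN: "(W *v xs) \<bullet> (\<Sigma> *v (W *v y)) = (W *v y) \<bullet> (\<Sigma> *v (W *v xs))" for y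
      using sym_inner[OF Ssym, of "W *v xs" "W *v y"] by (simp add: inner_commute)
    have crossD: "xs \<bullet> (W *v y) = y \<bullet> (W *v xs)" for y
      using sym_inner[OF Wsym, of xs y] by (simp add: inner_commute)
    have Nexp: "N (xs + t *\<^sub>R y) = N xs + 2 * t * ((W *v y) \<bullet> (\<Sigma> *v (W *v xs))) + t^2 * N y" for t y
      unfolding N_def using crossN[of y]
      by (simp add: matrix_vector_right_distrib matrix_vector_mult_scaleR inner_add_left inner_add_right power2_eq_square algebra_simps)
    have Dexp: "D (xs + t *\<^sub>R y) = D xs + 2 * t * (y \<bullet> (W *v xs)) + t^2 * D y" for t y
      unfolding D_def using crossD[of y]
      by (simp add: matrix_vector_right_distrib matrix_vector_mult_scaleR inner_add_left inner_add_right power2_eq_square algebra_simps)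
    have stat: "(W *v y) \<bullet> (\<Sigma> *v (W *v xs)) = 0" if yV: "y \<in> V" and yW: "y \<bullet> (W *v xs) = 0" for y
    proof (rule quad_zero)
      fix t
      have "xs + t *\<^sub>R y \<in> V" using Vsub[OF xsV yV] .
      then have "N (xs + t *\<^sub>R y) \<le> M * D (xs + t *\<^sub>R y)" by (rule maxV)
      then show "2 * t * ((W *v y) \<bullet> (\<Sigma> *v (W *v xs))) + t^2 * (N y - M * D y) \<le> 0"
        unfolding Nexp Dexp yW NM by (simp add: algebra_simps)
    qed
    define z where "z = \<Sigma> *v (W *v xs) - M *\<^sub>R xs"
    have zV: "z \<in> V" unfolding inV
    proof
      fix i assume i: "i \<in> {1..?n}"
      have "g i \<bullet> (\<Sigma> *v (W *v xs)) = (\<Sigma> *v g i) \<bullet> (W *v xs)" using sym_inner[OF Ssym] by simp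
      also have "\<dots> = (W *v (\<Sigma> *v g i)) \<bullet> xs" by (rule sym_inner[OF Wsym])
      also have "\<dots> = lam i * (g i \<bullet> xs)" using WSg[OF i] by simp
      also have "\<dots> = 0" using xsV i unfolding inV by simp
      finally show "g i \<bullet> z = 0" using xsV i unfolding z_def inV by (simp add: inner_diff_right)
    qed
    have zW: "z \<bullet> (W *v xs) = 0"
    proof -
      have "z \<bullet> (W *v xs) = (\<Sigma> *v (W *v xs)) \<bullet> (W *v xs) - M * (xs \<bullet> (W *v xs))"
        unfolding z_def by (simp add: inner_diff_left)
      also have "(\<Sigma> *v (W *v xs)) \<bullet> (W *v xs) = N xs" unfolding N_def by (rule inner_commute)
      finally have "z \<bullet> (W *v xs) = N xs - M * D xs" unfolding D_def .
      then show ?thesis using NM by simp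
    qed
    have s0: "(W *v z) \<bullet> (\<Sigma> *v (W *v xs)) = 0" using stat[OF zV zW] .
    have "D z = (W *v z) \<bullet> z" unfolding D_def using sym_inner[OF Wsym, of z z] by simp
    also have "\<dots> = (W *v z) \<bullet> (\<Sigma> *v (W *v xs)) - M * ((W *v z) \<bullet> xs)"
      by (simp add: z_def inner_diff_right)
    also have "(W *v z) \<bullet> xs = z \<bullet> (W *v xs)" using sym_inner[OF Wsym, of z xs] by simp
    finally have "D z = 0" using s0 zW by simp
    then have "z = 0" using Dpos by force
    then have eigx: "\<Sigma> *v (W *v xs) = M *\<^sub>R xs" unfolding z_def by simp
    have Wxs: "W *v xs \<noteq> 0" using Dxs unfolding D_def by auto
    have "N xs > 0" unfolding N_def using Sigma_pd Wxs unfolding pos_def_mat_def by blast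
    then have Mpos: "M > 0" unfolding M_def using Dxs by simp
    define f where "f = (\<lambda>t. xs \<bullet> \<phi> t)"
    have "eigenpair T \<kappa> M f"
      unfolding eigenpair_def
    proof (intro conjI)
      show "L2_on T f" unfolding L2_on_def f_def
        using innmeas W_ipi[of xs xs] by (simp add: power2_eq_square)
      show "\<not> (AE t in ?L. f t = 0)" unfolding f_def using phi_indep xsn by blast
      have "intop T \<kappa> f s = M * f s" for s
      proof -
        have "intop T \<kappa> f s = (\<integral>t. ((\<Sigma> *v \<phi> s) \<bullet> \<phi> t) * (xs \<bullet> \<phi> t) \<partial>?L)"
          unfolding intop_def \<kappa>_def f_def sym_inner[OF Ssym] ..
        also have "\<dots> = (\<Sigma> *v \<phi> s) \<bullet> (W *v xs)" by (rule W_ip)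
        also have "\<dots> = \<phi> s \<bullet> (\<Sigma> *v (W *v xs))" using sym_inner[OF Ssym] by simp
        also have "\<dots> = M * f s" unfolding eigx f_def by (simp add: inner_commute)
        finally show ?thesis .
      qed
      then show "AE s in ?L. intop T \<kappa> f s = M * f s" by simp
    qed
    moreover have "\<forall>i\<in>{1..?n}. ipT T f (xi i) = 0"
    proof
      fix i assume i: "i \<in> {1..?n}"
      have "ipT T f (xi i) = xs \<bullet> g i"
        unfolding ipT_def f_def g_def using int_inner(2)[of ?L \<phi> "xi i", OF int_px[OF i]] .
      then show "ipT T f (xi i) = 0" using xsV i unfolding inV by (simp add: inner_commute)
    qed
    ultimately have "M \<le> lam ?n" using maxl by blast
    with Mpos lamn show False by simp
  qed
  define bv where "bv = (\<lambda>j. (1 / lam j) *\<^sub>R (\<Sigma> *v g j))"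
  have Sg: "\<Sigma> *v g j = lam j *\<^sub>R bv j" if "j \<in> {1..?n}" for j using lam0[OF that] unfolding bv_def by simp
  have xiAE: "AE s in ?L. xi j s = bv j \<bullet> \<phi> s" if j: "j \<in> {1..?n}" for j
    using eigAE[OF j]
  proof eventually_elim
    case (elim s) then show ?case using lam0[OF j] unfolding bv_def by (simp add: inner_commute field_simps)
  qed
  have gW: "g j = W *v bv j" if j: "j \<in> {1..?n}" for j
  proof -
    have "g j $ k = (W *v bv j) $ k" for k
    proof -
      have "g j $ k = (\<integral>t. \<phi> t $ k * xi j t \<partial>?L)" unfolding g_def by simp
      also have "\<dots> = (\<integral>t. \<phi> t $ k * (bv j \<bullet> \<phi> t) \<partial>?L)"
      proof (rule integral_cong_AE)
        show "(\<lambda>t. \<phi> t $ k * xi j t) \<in> borel_measurable ?L"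
          using int_px[OF j] by (rule borel_measurable_integrable)
        show "(\<lambda>t. \<phi> t $ k * (bv j \<bullet> \<phi> t)) \<in> borel_measurable ?L"
          using W_compi by (rule borel_measurable_integrable)
        show "AE t in ?L. \<phi> t $ k * xi j t = \<phi> t $ k * (bv j \<bullet> \<phi> t)"
          using xiAE[OF j] by eventually_elim simp
      qed
      also have "\<dots> = (W *v bv j) $ k" by (rule W_comp)
      finally show ?thesis .
    qed
    then show ?thesis by (simp add: vec_eq_iff)
  qed
  have bWb: "bv i \<bullet> (W *v bv j) = (if i = j then 1 else 0)" if ij: "i \<in> {1..?n}" "j \<in> {1..?n}" for i j
  proof -
    have "ipT T (xi i) (xi j) = (\<integral>t. (bv i \<bullet> \<phi> t) * (bv j \<bullet> \<phi> t) \<partial>?L)"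
      unfolding ipT_def
    proof (rule integral_cong_AE)
      show "(\<lambda>t. xi i t * xi j t) \<in> borel_measurable ?L"
        using ximeas[OF ij(1)] ximeas[OF ij(2)] by simp
      show "(\<lambda>t. (bv i \<bullet> \<phi> t) * (bv j \<bullet> \<phi> t)) \<in> borel_measurable ?L"
        using W_ipi by (rule borel_measurable_integrable)
      show "AE t in ?L. xi i t * xi j t = (bv i \<bullet> \<phi> t) * (bv j \<bullet> \<phi> t)"
        using xiAE[OF ij(1)] xiAE[OF ij(2)] by eventually_elim simp
    qed
    then show ?thesis using on[OF ij] W_ip by simp
  qed
  have gb: "g j \<bullet> bv i = (if i = j then 1 else 0)" if ij: "i \<in> {1..?n}" "j \<in> {1..?n}" for i j
  proof -
    have "g j \<bullet> bv i = (W *v bv j) \<bullet> bv i" using gW[OF ij(2)] by simp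
    also have "\<dots> = bv j \<bullet> (W *v bv i)" using sym_inner[OF Wsym] by simp
    also have "\<dots> = (if i = j then 1 else 0)" using bWb[OF ij(2) ij(1)] by auto
    finally show ?thesis .
  qed
  have ginj: "inj_on g {1..?n}"
  proof (rule inj_onI)
    fix i j assume ij: "i \<in> {1..?n}" "j \<in> {1..?n}" "g i = g j"
    have "g i \<bullet> bv i = 1" using gb[OF ij(1) ij(1)] by simp
    moreover have "g j \<bullet> bv i = (if i = j then 1 else 0)" using gb[OF ij(1) ij(2)] .
    ultimately show "i = j" using ij(3) by (auto split: if_splits)
  qed
  have indep: "independent (g ` {1..?n})"
  proof
    assume "dependent (g ` {1..?n})"
    then obtain u where u: "\<exists>v\<in>g ` {1..?n}. u v \<noteq> 0" "(\<Sum>v\<in>g ` {1..?n}. u v *\<^sub>R v) = 0"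
      using dependent_finite[of "g ` {1..?n}"] by auto
    have s0: "(\<Sum>i\<in>{1..?n}. u (g i) *\<^sub>R g i) = 0" using u(2) sum.reindex[OF ginj, of "\<lambda>v. u v *\<^sub>R v"] by simp
    have uz: "u (g k) = 0" if k: "k \<in> {1..?n}" for k
    proof -
      have "0 = (\<Sum>i\<in>{1..?n}. u (g i) *\<^sub>R g i) \<bullet> bv k" using s0 by simp
      also have "\<dots> = (\<Sum>i\<in>{1..?n}. u (g i) * (g i \<bullet> bv k))" by (simp add: inner_sum_left)
      also have "\<dots> = (\<Sum>i\<in>{1..?n}. if k = i then u (g i) else 0)"
        using gb[OF k] by (intro sum.cong) auto
      also have "\<dots> = u (g k)" using k by simp
      finally show ?thesis by simp
    qed
    with u(1) show False by auto
  qed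
  have cardG: "card (g ` {1..?n}) = ?n" using card_image[OF ginj] by simp
  have spanG: "UNIV \<subseteq> span (g ` {1..?n})"
    using card_ge_dim_independent[of "g ` {1..?n}" UNIV] indep cardG by simp
  have expand: "v = (\<Sum>i\<in>{1..?n}. (g i \<bullet> v) *\<^sub>R bv i)" for v
  proof -
    define w where "w = v - (\<Sum>i\<in>{1..?n}. (g i \<bullet> v) *\<^sub>R bv i)"
    have gw: "g j \<bullet> w = 0" if j: "j \<in> {1..?n}" for j
    proof -
      have "g j \<bullet> (\<Sum>i\<in>{1..?n}. (g i \<bullet> v) *\<^sub>R bv i) = (\<Sum>i\<in>{1..?n}. (g i \<bullet> v) * (g j \<bullet> bv i))"
        by (simp add: inner_sum_right)
      also have "\<dots> = (\<Sum>i\<in>{1..?n}. if j = i then g i \<bullet> v else 0)"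
        using gb[OF _ j] by (intro sum.cong) auto
      also have "\<dots> = g j \<bullet> v" using j by simp
      finally show ?thesis unfolding w_def by (simp add: inner_diff_right)
    qed
    have "w \<in> span (g ` {1..?n})" using spanG by auto
    then obtain u where u: "w = (\<Sum>x\<in>g ` {1..?n}. u x *\<^sub>R x)" using span_finite[of "g ` {1..?n}"] by auto
    have "w \<bullet> w = (\<Sum>x\<in>g ` {1..?n}. u x * (x \<bullet> w))" by (subst (1) u) (simp add: inner_sum_left)
    also have "\<dots> = 0" using gw by (intro sum.neutral) auto
    finally have "w = 0" by simp
    then show ?thesis unfolding w_def by simp
  qed
  have Sib: "Si *v bv i = (1 / lam i) *\<^sub>R g i" if i: "i \<in> {1..?n}" for i
  proof -
    have "Si *v (\<Sigma> *v g i) = g i" unfolding Si_def using inv_vec(2)[OF Sinv] .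
    then have "lam i *\<^sub>R (Si *v bv i) = g i" using Sg[OF i] by (simp add: matrix_vector_mult_scaleR)
    then show ?thesis using lam0[OF i] by (metis divide_inverse_commute inverse_eq_divide real_vector.scale_left_imp_eq scaleR_scaleR right_inverse real_vector.scale_one)
  qed
  have quad: "v \<bullet> (Si *v v) = (\<Sum>i\<in>{1..?n}. (v \<bullet> g i)^2 / lam i)" for v
  proof -
    have "Si *v v = Si *v (\<Sum>i\<in>{1..?n}. (g i \<bullet> v) *\<^sub>R bv i)" by (rule arg_cong[where f="(*v) Si"]) (rule expand)
    also have "\<dots> = (\<Sum>i\<in>{1..?n}. (g i \<bullet> v) *\<^sub>R (Si *v bv i))" by (simp add: vec.sum matrix_vector_mult_scaleR)
    also have "\<dots> = (\<Sum>i\<in>{1..?n}. ((g i \<bullet> v) / lam i) *\<^sub>R g i)" using Sib by (intro sum.cong) auto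
    finally show ?thesis by (simp add: inner_sum_right power2_eq_square inner_commute)
  qed
  define vv where "vv = (\<lambda>p. Wi *v (gram (P p) \<phi> *v c))"
  have unionint: "(\<integral>t. indicator (\<Union>p\<in>R. P p) t * h t \<partial>?L) = (\<Sum>p\<in>R. integral\<^sup>L (lebesgue_on (P p)) h)"
    if R: "R \<subseteq> {1..d}" and h: "integrable ?L h" for R and h :: "real \<Rightarrow> real"
  proof -
    have finR: "finite R" using R finite_subset by blast
    have disj: "disjoint_family_on P R" using parts_disj R unfolding disjoint_family_on_def by blast
    have "(\<integral>t. indicator (\<Union>p\<in>R. P p) t * h t \<partial>?L) = (\<integral>t. (\<Sum>p\<in>R. indicator (P p) t * h t) \<partial>?L)"
    proof -
      have "indicator (\<Union>p\<in>R. P p) t * h t = (\<Sum>p\<in>R. indicator (P p) t * h t)" for t :: real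
      proof -
        have "indicator (\<Union>p\<in>R. P p) t = (\<Sum>p\<in>R. indicator (P p) t :: real)"
          by (rule indicator_UN_disjoint[OF finR disj])
        then show ?thesis by (simp add: sum_distrib_right)
      qed
      then show ?thesis by simp
    qed
    also have "\<dots> = (\<Sum>p\<in>R. \<integral>t. indicator (P p) t * h t \<partial>?L)"
    proof (rule Bochner_Integration.integral_sum)
      fix p assume "p \<in> R"
      then have "P p \<in> sets ?L" using setsL Psub Pleb R by blast
      then show "integrable ?L (\<lambda>t. indicator (P p) t * h t)"
        using integrable_real_mult_indicator[OF _ h] by (simp add: mult.commute)
    qed
    also have "\<dots> = (\<Sum>p\<in>R. integral\<^sup>L (lebesgue_on (P p)) h)"
    proof (rule sum.cong[OF refl])
      fix p assume "p \<in> R"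
      then have p: "p \<in> {1..d}" using R by blast
      show "(\<integral>t. indicator (P p) t * h t \<partial>?L) = integral\<^sup>L (lebesgue_on (P p)) h"
        using restr_integral[OF Psub[OF p] Pleb[OF p] Tleb] by simp
    qed
    finally show ?thesis .
  qed
  have ipR: "ipT T (\<lambda>t. Xhat P R (\<lambda>t. A \<omega> \<bullet> \<phi> t) (\<lambda>t. ma \<bullet> \<phi> t) t - ma \<bullet> \<phi> t) (xi i) = (\<Sum>p\<in>R. vv p) \<bullet> g i"
    if R: "R \<subseteq> {1..d}" and i: "i \<in> {1..?n}" for R i
  proof -
    let ?U = "\<Union>p\<in>R. P p"
    have finR: "finite R" using R finite_subset by blast
    have U: "?U \<in> sets ?L" using setsL Psub Pleb R finR by (intro sets.finite_UN) auto
    have "ipT T (\<lambda>t. Xhat P R (\<lambda>t. A \<omega> \<bullet> \<phi> t) (\<lambda>t. ma \<bullet> \<phi> t) t - ma \<bullet> \<phi> t) (xi i)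
        = (\<integral>t. indicator ?U t * ((c \<bullet> \<phi> t) * xi i t) \<partial>?L)"
      unfolding ipT_def Xhat_def c_def by (intro Bochner_Integration.integral_cong) (auto simp: indicator_def inner_diff_left)
    also have "\<dots> = (\<integral>t. indicator ?U t * ((c \<bullet> \<phi> t) * (bv i \<bullet> \<phi> t)) \<partial>?L)"
    proof (rule integral_cong_AE)
      show "(\<lambda>t. indicator ?U t * ((c \<bullet> \<phi> t) * xi i t)) \<in> borel_measurable ?L"
        using U innmeas ximeas[OF i] by (intro borel_measurable_times borel_measurable_indicator) auto
      show "(\<lambda>t. indicator ?U t * ((c \<bullet> \<phi> t) * (bv i \<bullet> \<phi> t))) \<in> borel_measurable ?L"
        using U innmeas by (intro borel_measurable_times borel_measurable_indicator) auto
      show "AE t in ?L. indicator ?U t * ((c \<bullet> \<phi> t) * xi i t) = indicator ?U t * ((c \<bullet> \<phi> t) * (bv i \<bullet> \<phi> t))"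
        using xiAE[OF i] by eventually_elim simp
    qed
    also have "\<dots> = (\<Sum>p\<in>R. integral\<^sup>L (lebesgue_on (P p)) (\<lambda>t. (c \<bullet> \<phi> t) * (bv i \<bullet> \<phi> t)))"
      by (rule unionint[OF R W_ipi])
    also have "\<dots> = (\<Sum>p\<in>R. vv p \<bullet> g i)"
    proof (rule sum.cong[OF refl])
      fix p assume "p \<in> R"
      then have p: "p \<in> {1..d}" using R by blast
      have "integral\<^sup>L (lebesgue_on (P p)) (\<lambda>t. (c \<bullet> \<phi> t) * (bv i \<bullet> \<phi> t)) = c \<bullet> (gram (P p) \<phi> *v bv i)"
        unfolding gram_def using gram_ip(2)[OF int_pp_P[OF p]] .
      also have "\<dots> = (gram (P p) \<phi> *v c) \<bullet> bv i" using sym_inner[OF Wb_sym] by simp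
      also have "\<dots> = (W *v vv p) \<bullet> bv i" unfolding vv_def Wi_def using inv_vec(1)[OF Winv] by simp
      also have "\<dots> = vv p \<bullet> (W *v bv i)" using sym_inner[OF Wsym] by simp
      also have "\<dots> = vv p \<bullet> g i" using gW[OF i] by simp
      finally show "integral\<^sup>L (lebesgue_on (P p)) (\<lambda>t. (c \<bullet> \<phi> t) * (bv i \<bullet> \<phi> t)) = vv p \<bullet> g i" .
    qed
    also have "\<dots> = (\<Sum>p\<in>R. vv p) \<bullet> g i" by (simp add: inner_sum_left)
    finally show ?thesis .
  qed
  have fmdR: "fmd2 T ?n lam xi (Xhat P R (\<lambda>t. A \<omega> \<bullet> \<phi> t) (\<lambda>t. ma \<bullet> \<phi> t)) (\<lambda>t. ma \<bullet> \<phi> t)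
      = (\<Sum>p\<in>R. \<Sum>q\<in>R. vv p \<bullet> (Si *v vv q))" if R: "R \<subseteq> {1..d}" for R
  proof -
    have "fmd2 T ?n lam xi (Xhat P R (\<lambda>t. A \<omega> \<bullet> \<phi> t) (\<lambda>t. ma \<bullet> \<phi> t)) (\<lambda>t. ma \<bullet> \<phi> t)
        = (\<Sum>i=1..?n. ((\<Sum>p\<in>R. vv p) \<bullet> g i)^2 / lam i)"
      unfolding fmd2_def using ipR[OF R] by (intro sum.cong) auto
    also have "\<dots> = (\<Sum>p\<in>R. vv p) \<bullet> (Si *v (\<Sum>p\<in>R. vv p))" using quad by simp
    also have "\<dots> = (\<Sum>p\<in>R. \<Sum>q\<in>R. vv p \<bullet> (Si *v vv q))" by (simp add: vec.sum inner_sum_left inner_sum_right) (rule sum.swap)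
    finally show ?thesis .
  qed
  have sumvv: "(\<Sum>p\<in>{1..d}. vv p) = c"
  proof -
    have "(\<Sum>p\<in>{1..d}. gram (P p) \<phi> *v c) $ k = (W *v c) $ k" for k
    proof -
      have "(\<Sum>p\<in>{1..d}. gram (P p) \<phi> *v c) $ k = (\<Sum>p\<in>{1..d}. (gram (P p) \<phi> *v c) $ k)" by simp
      also have "\<dots> = (\<Sum>p\<in>{1..d}. integral\<^sup>L (lebesgue_on (P p)) (\<lambda>t. \<phi> t $ k * (c \<bullet> \<phi> t)))"
      proof (rule sum.cong[OF refl])
        fix p assume p: "p \<in> {1..d}"
        show "(gram (P p) \<phi> *v c) $ k = integral\<^sup>L (lebesgue_on (P p)) (\<lambda>t. \<phi> t $ k * (c \<bullet> \<phi> t))"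
          unfolding gram_def using gram_comp(2)[OF int_pp_P[OF p]] by simp
      qed
      also have "\<dots> = (\<integral>t. indicator (\<Union>p\<in>{1..d}. P p) t * (\<phi> t $ k * (c \<bullet> \<phi> t)) \<partial>?L)"
        using unionint[OF subset_refl W_compi] by simp
      also have "\<dots> = (\<integral>t. \<phi> t $ k * (c \<bullet> \<phi> t) \<partial>?L)"
        using parts_union by (intro Bochner_Integration.integral_cong) (auto simp: indicator_def)
      also have "\<dots> = (W *v c) $ k" by (rule W_comp)
      finally show ?thesis .
    qed
    then have "(\<Sum>p\<in>{1..d}. gram (P p) \<phi> *v c) = W *v c" by (simp add: vec_eq_iff)
    then have "Wi *v (\<Sum>p\<in>{1..d}. gram (P p) \<phi> *v c) = c" unfolding Wi_def using inv_vec(2)[OF Winv] by simp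
    then show ?thesis unfolding vv_def by (simp add: vec.sum)
  qed
  have qsym: "vv p \<bullet> (Si *v vv q) = vv q \<bullet> (Si *v vv p)" for p q
    using sym_inner[OF Sisym, of "vv p" "vv q"] by (simp add: inner_commute)
  have "theta T P d a ?n lam xi (\<lambda>t. A \<omega> \<bullet> \<phi> t) (\<lambda>t. ma \<bullet> \<phi> t)
      = (\<Sum>R\<in>Pow ({1..d} - {a}). (fact (card R) * fact (d - card R - 1) / fact d) *
          ((\<Sum>p\<in>insert a R. \<Sum>q\<in>insert a R. vv p \<bullet> (Si *v vv q)) - (\<Sum>p\<in>R. \<Sum>q\<in>R. vv p \<bullet> (Si *v vv q))))"
    unfolding theta_def
  proof (rule sum.cong[OF refl])
    fix R assume "R \<in> Pow ({1..d} - {a})"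
    then have R1: "R \<subseteq> {1..d}" and R2: "insert a R \<subseteq> {1..d}" using a_in by auto
    show "fact (card R) * fact (d - card R - 1) / fact d *
        (fmd2 T ?n lam xi (Xhat P (insert a R) (\<lambda>t. A \<omega> \<bullet> \<phi> t) (\<lambda>t. ma \<bullet> \<phi> t)) (\<lambda>t. ma \<bullet> \<phi> t) -
         fmd2 T ?n lam xi (Xhat P R (\<lambda>t. A \<omega> \<bullet> \<phi> t) (\<lambda>t. ma \<bullet> \<phi> t)) (\<lambda>t. ma \<bullet> \<phi> t)) =
        fact (card R) * fact (d - card R - 1) / fact d *
          ((\<Sum>p\<in>insert a R. \<Sum>q\<in>insert a R. vv p \<bullet> (Si *v vv q)) - (\<Sum>p\<in>R. \<Sum>q\<in>R. vv p \<bullet> (Si *v vv q)))"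
      using fmdR[OF R1] fmdR[OF R2] by simp
  qed
  also have "\<dots> = (\<Sum>q\<in>{1..d}. vv a \<bullet> (Si *v vv q))"
    by (rule shapley_quad[where q="\<lambda>p q. vv p \<bullet> (Si *v vv q)", OF qsym d_pos a_in])
  also have "\<dots> = vv a \<bullet> (Si *v c)" using sumvv[symmetric] by (simp add: vec.sum inner_sum_right)
  also have "\<dots> = c \<bullet> ((gram (P a) \<phi> ** Wi ** Si) *v c)"
  proof -
    have "c \<bullet> ((gram (P a) \<phi> ** Wi ** Si) *v c) = c \<bullet> (gram (P a) \<phi> *v (Wi *v (Si *v c)))"
      by (simp add: matrix_vector_mul_assoc matrix_mul_assoc)
    also have "\<dots> = (gram (P a) \<phi> *v c) \<bullet> (Wi *v (Si *v c))" using sym_inner[OF Wb_sym] by simp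
    also have "\<dots> = vv a \<bullet> (Si *v c)" unfolding vv_def using sym_inner[OF Wisym] by simp
    finally show ?thesis by simp
  qed
  finally show ?thesis unfolding c_def Wi_def W_def Si_def .
qed
end
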